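(* Let $\Omega=[-1/2,1/2]^d$ and let $\Lambda\subseteq\mathbb{R}^d$ be a set of stable sampling for $\mathcal{B}_\Omega$ with bounds $A,B$. Then $\Lambda$ intersects every cube $x+[-R,R]^d$, $x\in\mathbb{R}^d$, where \[ R=\frac12+\frac{d\,\pi^{2d-2}}{2^{2d-1}}\frac{B}{A}. \]
   Context: Fourier transform: $\widehat f(\omega)=\int_{\mathbb{R}^d} f(r)e^{-2\pi i\langle\omega,r\rangle}dr$. $\mathcal{B}_\Omega=\{f\in L^2(\mathbb{R}^d):\widehat f=0\text{ a.e. outside }\Omega\}$. $\Lambda$ is a set of stable sampling for $\mathcal{B}_\Omega$ with bounds $0<A\le B<\infty$ if $A\|f\|_2^2\le\sum_{\lambda\in\Lambda}|f(\lambda)|^2\le B\|f\|_2^2$ for all $f\in\mathcal{B}_\Omega$. (This is part (b) of the proposition; part (a) is attributed to earlier work.) *)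

theory Defs
  imports "HOL-Analysis.Analysis"
begin

definition unit_cube :: "(real ^ 'n) set" where
  "unit_cube = {w. \<forall>i. \<bar>w $ i\<bar> \<le> 1/2}"

text \<open>Paley--Wiener space B_Omega: the (continuous representatives of) L^2 functions whose
  Fourier transform vanishes outside Omega, i.e. f(x) = int_Omega g(w) e^{2 pi i <w,x>} dw
  with g in L^2(Omega); f itself is required to be in L^2(R^d).\<close>
definition PW :: "(real ^ 'n) set \<Rightarrow> ((real ^ 'n) \<Rightarrow> complex) set" where
  "PW \<Omega> = {f. (\<exists>g. g \<in> borel_measurable lborel
                    \<and> set_integrable lborel \<Omega> (\<lambda>w. (cmod (g w))\<^sup>2)
                    \<and> (\<forall>x. f x = (LINT w:\<Omega>|lborel. g w * cis (2 * pi * (w \<bullet> x)))))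
             \<and> f \<in> borel_measurable lborel
             \<and> integrable lborel (\<lambda>x. (cmod (f x))\<^sup>2)}"

definition L2_norm_sq :: "((real ^ 'n) \<Rightarrow> complex) \<Rightarrow> real" where
  "L2_norm_sq f = (LINT x|lborel. (cmod (f x))\<^sup>2)"

definition stable_sampling ::
  "(real ^ 'n) set \<Rightarrow> (real ^ 'n) set \<Rightarrow> real \<Rightarrow> real \<Rightarrow> bool" where
  "stable_sampling \<Lambda> \<Omega> A B \<longleftrightarrow> 0 < A \<and> A \<le> B \<and>
     (\<forall>f \<in> PW \<Omega>. (\<lambda>l. (cmod (f l))\<^sup>2) summable_on \<Lambda>
        \<and> A * L2_norm_sq f \<le> (\<Sum>\<^sub>\<infinity>l\<in>\<Lambda>. (cmod (f l))\<^sup>2)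
        \<and> (\<Sum>\<^sub>\<infinity>l\<in>\<Lambda>. (cmod (f l))\<^sup>2) \<le> B * L2_norm_sq f)"

end

theory Submission
  imports Defs
begin


lemma prod_axis: "(\<Prod>b\<in>(Basis::(real^'n) set). f b) = (\<Prod>i\<in>UNIV. f (axis i 1))"
proof -
  have "(Basis::(real^'n) set) = (\<lambda>i. axis i 1) ` UNIV"
    by (auto simp: Basis_vec_def)
  moreover have "inj (\<lambda>i::'n. axis i (1::real))"
    by (auto simp: inj_def axis_eq_axis)
  ultimately show ?thesis by (metis (no_types, lifting) prod.reindex_cong)

qed

lemma lborel_vec_prod:
  fixes f :: "'n::finite \<Rightarrow> real \<Rightarrow> 'b::{real_normed_field,banach,second_countable_topology}"
  assumes int: "\<And>i. integrable lborel (f i)"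
  shows "integrable lborel (\<lambda>x::real^'n. \<Prod>i\<in>UNIV. f i (x$i))"
    and "(\<integral>x. (\<Prod>i\<in>UNIV. f i (x$i)) \<partial>(lborel::(real^'n) measure)) = (\<Prod>i\<in>UNIV. integral\<^sup>L lborel (f i))"
proof -
  interpret product_sigma_finite "\<lambda>_::(real^'n). lborel::real measure"
    by standard
  define g where "g b = f (SOME i. b = axis i 1)" for b :: "real^'n"
  have gax: "g (axis i 1) = f i" for i
    unfolding g_def by (rule arg_cong[where f=f]) (auto simp: axis_eq_axis)
  have eq: "(\<Prod>i\<in>UNIV. f i (x$i)) = (\<Prod>b\<in>Basis. g b (x \<bullet> b))" for x :: "real^'n"
    by (simp add: prod_axis gax inner_axis)
  have gint: "\<And>b. b \<in> Basis \<Longrightarrow> integrable lborel (g b)"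
    by (auto simp: Basis_vec_def gax int)
  have gm[measurable]: "g b \<in> borel_measurable borel" if "b \<in> Basis" for b
    using gint[OF that] by (simp add: borel_measurable_integrable measurable_lborel1[symmetric])
  have gmeas: "(\<lambda>x::real^'n. \<Prod>b\<in>Basis. g b (x \<bullet> b)) \<in> borel_measurable borel"
    by measurable
  have meas: "(\<lambda>f. \<Sum>b\<in>Basis. f b *\<^sub>R b) \<in> measurable (Pi\<^sub>M (Basis::(real^'n) set) (\<lambda>_. lborel)) (borel :: (real^'n) measure)"
    by measurable
  have inner: "(\<Sum>b\<in>Basis. y b *\<^sub>R b) \<bullet> c = y c" if "c \<in> Basis" for y and c :: "real^'n"
    using that by (simp add: inner_sum_left inner_Basis if_distrib cong: if_cong)
  have pi: "integrable (Pi\<^sub>M Basis (\<lambda>_. lborel)) (\<lambda>y. \<Prod>b\<in>(Basis::(real^'n) set). g b (y b))"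
    by (rule product_integrable_prod) (auto intro: gint)
  have "integrable (Pi\<^sub>M Basis (\<lambda>_. lborel)) (\<lambda>y. (\<lambda>x::real^'n. \<Prod>b\<in>Basis. g b (x \<bullet> b)) (\<Sum>b\<in>Basis. y b *\<^sub>R b))"
    using pi by (simp add: inner cong: prod.cong)
  then have "integrable (distr (Pi\<^sub>M Basis (\<lambda>_. lborel)) borel (\<lambda>f. \<Sum>b\<in>Basis. f b *\<^sub>R b)) (\<lambda>x::real^'n. \<Prod>b\<in>Basis. g b (x \<bullet> b))"
    by (subst integrable_distr_eq[OF meas gmeas])
  then show "integrable lborel (\<lambda>x::real^'n. \<Prod>i\<in>UNIV. f i (x$i))"
    by (simp add: eq lborel_eq[symmetric])
  have "(\<integral>x. (\<Prod>b\<in>Basis. g b (x \<bullet> b)) \<partial>(lborel::(real^'n) measure))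
       = (\<integral>y. (\<Prod>b\<in>(Basis::(real^'n) set). g b (y b)) \<partial>(Pi\<^sub>M Basis (\<lambda>_. lborel)))"
    apply (subst lborel_eq)
    apply (subst integral_distr[OF meas gmeas])
    apply (simp add: inner cong: prod.cong)
    done
  also have "\<dots> = (\<Prod>b\<in>(Basis::(real^'n) set). integral\<^sup>L lborel (g b))"
    by (rule product_integral_prod) (auto intro: gint)
  also have "\<dots> = (\<Prod>i\<in>UNIV. integral\<^sup>L lborel (f i))"
    by (simp add: prod_axis gax)
  finally show "(\<integral>x. (\<Prod>i\<in>UNIV. f i (x$i)) \<partial>(lborel::(real^'n) measure)) = (\<Prod>i\<in>UNIV. integral\<^sup>L lborel (f i))"
    by (simp add: eq)
qed



lemma lin_exp_has_integral:
  fixes a :: real and p q :: complex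
  assumes a: "a \<noteq> 0" and lh: "lo \<le> hi"
  defines "H \<equiv> (\<lambda>z::complex. exp (\<i> * of_real a * z) * (p + q * z) / (\<i> * of_real a) + q * exp (\<i> * of_real a * z) / (of_real a)\<^sup>2)"
  shows "((\<lambda>w. (p + q * of_real w) * exp (\<i> * of_real a * of_real w)) has_integral (H (of_real hi) - H (of_real lo))) {lo..hi}"
proof -
  have d: "(H has_field_derivative (p + q * z) * exp (\<i> * of_real a * z)) (at z)" for z
    unfolding H_def using a
    by (auto intro!: derivative_eq_intros simp: field_simps power2_eq_square power4_eq_xxxx)
  show ?thesis
    apply (rule fundamental_theorem_of_calculus[OF lh])
    apply (rule has_vector_derivative_at_within)
    apply (rule has_vector_derivative_real_field)
    apply (rule d)
    done
qed


lemma lin_cis_has_integral: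
  fixes a :: real and p q :: complex
  assumes a: "a \<noteq> 0" and lh: "lo \<le> hi"
  shows "((\<lambda>w. (p + q * of_real w) * cis (a * w)) has_integral
     ((cis (a * hi) * (p + q * of_real hi) / (\<i> * of_real a) + q * cis (a * hi) / (of_real a)\<^sup>2)
     - (cis (a * lo) * (p + q * of_real lo) / (\<i> * of_real a) + q * cis (a * lo) / (of_real a)\<^sup>2))) {lo..hi}"
  using lin_exp_has_integral[OF a lh, of p q]
  by (simp add: cis_conv_exp mult.assoc)

lemma lin_has_integral:
  fixes p q :: complex
  assumes lh: "lo \<le> hi"
  shows "((\<lambda>w. (p + q * of_real w) * cis (0 * w)) has_integral
     ((p * of_real hi + q * (of_real hi)\<^sup>2 / 2) - (p * of_real lo + q * (of_real lo)\<^sup>2 / 2))) {lo..hi}"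
proof -
  have d: "((\<lambda>z. p * z + q * z\<^sup>2 / 2) has_field_derivative (p + q * z)) (at z)" for z :: complex
    by (auto intro!: derivative_eq_intros simp: field_simps power2_eq_square)
  show ?thesis
    apply simp
    apply (rule fundamental_theorem_of_calculus[OF lh, where f = "\<lambda>w. p * of_real w + q * (of_real w)\<^sup>2 / 2", simplified])
    apply (rule has_vector_derivative_at_within)
    apply (rule has_vector_derivative_real_field)
    apply (rule d)
    done
qed



definition kA :: "real \<Rightarrow> complex" where "kA w = of_real (1 - 2 * \<bar>w\<bar>)"
definition kB :: "real \<Rightarrow> complex" where "kB w = (if w \<le> 0 then \<i> / of_real pi else - \<i> / of_real pi)"
definition phiA :: "real \<Rightarrow> real" where
  "phiA u = (if u = 0 then 1/2 else (1 - cos (pi * u)) / (pi * u)\<^sup>2)"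
definition phiB :: "real \<Rightarrow> real" where
  "phiB u = (if u = 0 then 0 else (1 - cos (pi * u)) / (pi\<^sup>2 * u))"

lemma fourierA: "((\<lambda>v. kA v * cis (2 * pi * u * v)) has_integral of_real (phiA u)) {-1/2..1/2}"
proof (cases "u = 0")
  case True
  have 1: "((\<lambda>v. kA v * cis (2 * pi * u * v)) has_integral
     ((1 * of_real 0 + 2 * (of_real 0)\<^sup>2 / 2) - (1 * of_real (-1/2) + 2 * (of_real (-1/2))\<^sup>2 / 2))) {-1/2..0}"
    using lin_has_integral[where lo="-1/2" and hi=0 and p=1 and q=2]
    by (subst has_integral_cong[where g = "\<lambda>v. (1 + 2 * of_real v) * cis (0 * v)"])
        (auto simp: kA_def True)
  have 2: "((\<lambda>v. kA v * cis (2 * pi * u * v)) has_integral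
     ((1 * of_real (1/2) + (-2) * (of_real (1/2))\<^sup>2 / 2) - (1 * of_real 0 + (-2) * (of_real 0)\<^sup>2 / 2))) {0..1/2}"
    using lin_has_integral[where lo=0 and hi="1/2" and p=1 and q="-2"]
    by (subst has_integral_cong[where g = "\<lambda>v. (1 + (-2) * of_real v) * cis (0 * v)"])
        (auto simp: kA_def True)
  show ?thesis
    apply (rule has_integral_eq_rhs)
     apply (rule has_integral_combine[OF _ _ 1 2]; simp)
    apply (simp add: phiA_def True power2_eq_square)
    done
next
  case False
  define a where "a = 2 * pi * u"
  have a: "a \<noteq> 0" using False by (simp add: a_def)
  have 1: "((\<lambda>v. kA v * cis (2 * pi * u * v)) has_integral
     ((cis (a * 0) * (1 + 2 * of_real 0) / (\<i> * of_real a) + 2 * cis (a * 0) / (of_real a)\<^sup>2)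
     - (cis (a * (-1/2)) * (1 + 2 * of_real (-1/2)) / (\<i> * of_real a) + 2 * cis (a * (-1/2)) / (of_real a)\<^sup>2))) {-1/2..0}"
    using lin_cis_has_integral[OF a, where lo="-1/2" and hi=0 and p=1 and q=2]
    by (subst has_integral_cong[where g = "\<lambda>v. (1 + 2 * of_real v) * cis (a * v)"])
        (auto simp: kA_def a_def)
  have 2: "((\<lambda>v. kA v * cis (2 * pi * u * v)) has_integral
     ((cis (a * (1/2)) * (1 + (-2) * of_real (1/2)) / (\<i> * of_real a) + (-2) * cis (a * (1/2)) / (of_real a)\<^sup>2)
     - (cis (a * 0) * (1 + (-2) * of_real 0) / (\<i> * of_real a) + (-2) * cis (a * 0) / (of_real a)\<^sup>2))) {0..1/2}"
    using lin_cis_has_integral[OF a, where lo=0 and hi="1/2" and p=1 and q="-2"]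
    by (subst has_integral_cong[where g = "\<lambda>v. (1 + (-2) * of_real v) * cis (a * v)"])
        (auto simp: kA_def a_def)
  show ?thesis
    apply (rule has_integral_eq_rhs)
     apply (rule has_integral_combine[OF _ _ 1 2]; simp)
    using a False
    apply (simp add: phiA_def complex_eq_iff a_def field_simps power2_eq_square cis.ctr)
    done
qed

lemma fourierB: "((\<lambda>v. kB v * cis (2 * pi * u * v)) has_integral of_real (phiB u)) {-1/2..1/2}"
proof (cases "u = 0")
  case True
  have 1: "((\<lambda>v. kB v * cis (2 * pi * u * v)) has_integral
     ((\<i>/pi * of_real 0 + 0 * (of_real 0)\<^sup>2 / 2) - (\<i>/pi * of_real (-1/2) + 0 * (of_real (-1/2))\<^sup>2 / 2))) {-1/2..0}"
    using lin_has_integral[where lo="-1/2" and hi=0 and p="\<i>/pi" and q=0]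
    by (subst has_integral_cong[where g = "\<lambda>v. (\<i>/pi + 0 * of_real v) * cis (0 * v)"])
        (auto simp: kB_def True)
  have 2: "((\<lambda>v. kB v * cis (2 * pi * u * v)) has_integral
     ((-\<i>/pi * of_real (1/2) + 0 * (of_real (1/2))\<^sup>2 / 2) - (-\<i>/pi * of_real 0 + 0 * (of_real 0)\<^sup>2 / 2))) {0..1/2}"
    using lin_has_integral[where lo=0 and hi="1/2" and p="-\<i>/pi" and q=0]
    by (subst has_integral_spike_finite_eq[where S="{0}" and g = "\<lambda>v. (-\<i>/pi + 0 * of_real v) * cis (0 * v)"])
        (auto simp: kB_def True)
  show ?thesis
    apply (rule has_integral_eq_rhs)
     apply (rule has_integral_combine[OF _ _ 1 2]; simp)
    apply (simp add: phiB_def True)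
    done
next
  case False
  define a where "a = 2 * pi * u"
  have a: "a \<noteq> 0" using False by (simp add: a_def)
  have 1: "((\<lambda>v. kB v * cis (2 * pi * u * v)) has_integral
     ((cis (a * 0) * (\<i>/pi + 0 * of_real 0) / (\<i> * of_real a) + 0 * cis (a * 0) / (of_real a)\<^sup>2)
     - (cis (a * (-1/2)) * (\<i>/pi + 0 * of_real (-1/2)) / (\<i> * of_real a) + 0 * cis (a * (-1/2)) / (of_real a)\<^sup>2))) {-1/2..0}"
    using lin_cis_has_integral[OF a, where lo="-1/2" and hi=0 and p="\<i>/pi" and q=0]
    by (subst has_integral_cong[where g = "\<lambda>v. (\<i>/pi + 0 * of_real v) * cis (a * v)"])
        (auto simp: kB_def a_def)
  have 2: "((\<lambda>v. kB v * cis (2 * pi * u * v)) has_integral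
     ((cis (a * (1/2)) * (-\<i>/pi + 0 * of_real (1/2)) / (\<i> * of_real a) + 0 * cis (a * (1/2)) / (of_real a)\<^sup>2)
     - (cis (a * 0) * (-\<i>/pi + 0 * of_real 0) / (\<i> * of_real a) + 0 * cis (a * 0) / (of_real a)\<^sup>2))) {0..1/2}"
    using lin_cis_has_integral[OF a, where lo=0 and hi="1/2" and p="-\<i>/pi" and q=0]
    by (subst has_integral_spike_finite_eq[where S="{0}" and g = "\<lambda>v. (-\<i>/pi + 0 * of_real v) * cis (a * v)"])
        (auto simp: kB_def a_def)
  show ?thesis
    apply (rule has_integral_eq_rhs)
     apply (rule has_integral_combine[OF _ _ 1 2]; simp)
    using a False
    apply (simp add: phiB_def complex_eq_iff a_def field_simps power2_eq_square cis.ctr)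
    done
qed



lemma one_minus_cos_le: "1 - cos x \<le> x\<^sup>2 / 2" for x :: real
proof -
  have *: "1 - cos x \<le> x\<^sup>2 / 2" if "x \<ge> 0" for x :: real
  proof -
    let ?f = "\<lambda>x::real. x\<^sup>2 / 2 - 1 + cos x"
    have "\<And>u. \<lbrakk>0 \<le> u; u \<le> x\<rbrakk> \<Longrightarrow> (?f has_real_derivative u - sin u) (at u)"
      by (auto intro!: derivative_eq_intros simp: field_simps)
    moreover have "\<And>u. \<lbrakk>0 \<le> u; u \<le> x\<rbrakk> \<Longrightarrow> 0 \<le> u - sin u" using sin_x_le_x by simp
    ultimately have "?f x \<ge> ?f 0"
      by (intro DERIV_nonneg_imp_nondecreasing[OF that]) blast
    then show ?thesis by simp
  qed
  show ?thesis
  proof (cases "x \<ge> 0")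
    case True then show ?thesis by (rule *)
  next
    case False then show ?thesis using *[of "-x"] by simp
  qed
qed

lemma sin_ge_cubic: "x - x^3 / 6 \<le> sin x" if "x \<ge> 0" for x :: real
proof -
  let ?f = "\<lambda>x::real. sin x - x + x^3 / 6"
  have "\<And>u. \<lbrakk>0 \<le> u; u \<le> x\<rbrakk> \<Longrightarrow> (?f has_real_derivative cos u - 1 + u\<^sup>2 / 2) (at u)"
    by (auto intro!: derivative_eq_intros simp: field_simps power2_eq_square)
  moreover have "\<And>u::real. 0 \<le> cos u - 1 + u\<^sup>2 / 2" by (smt (verit) one_minus_cos_le)
  ultimately have "?f x \<ge> ?f 0"
    by (intro DERIV_nonneg_imp_nondecreasing[OF that]) blast
  then show ?thesis by simp
qed

lemma cos_le_quartic: "cos x \<le> 1 - x\<^sup>2 / 2 + x^4 / 24" for x :: real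
proof -
  have *: "cos x \<le> 1 - x\<^sup>2 / 2 + x^4 / 24" if "x \<ge> 0" for x :: real
  proof -
    let ?f = "\<lambda>x::real. 1 - x\<^sup>2 / 2 + x^4 / 24 - cos x"
    have "\<And>u. \<lbrakk>0 \<le> u; u \<le> x\<rbrakk> \<Longrightarrow> (?f has_real_derivative - u + u^3 / 6 + sin u) (at u)"
      by (auto intro!: derivative_eq_intros simp: field_simps power2_eq_square power3_eq_cube)
    moreover have "\<And>u. \<lbrakk>0 \<le> u; u \<le> x\<rbrakk> \<Longrightarrow> 0 \<le> - u + u^3 / 6 + sin u"
      using sin_ge_cubic by force
    ultimately have "?f x \<ge> ?f 0"
      by (intro DERIV_nonneg_imp_nondecreasing[OF that]) blast
    then show ?thesis by simp
  qed
  show ?thesis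
  proof (cases "x \<ge> 0")
    case True then show ?thesis by (rule *)
  next
    case False then show ?thesis using *[of "-x"] by simp
  qed
qed

lemma phiA_nonneg: "0 \<le> phiA u"
  by (simp add: phiA_def)

lemma phiA_le: "phiA u \<le> 1/2"
proof (cases "u = 0")
  case False
  then have D: "(pi * u)\<^sup>2 > 0" by simp
  have "1 - cos (pi * u) \<le> (pi * u)\<^sup>2 / 2" by (rule one_minus_cos_le)
  then show ?thesis using D False by (simp add: phiA_def pos_divide_le_eq)
qed (simp add: phiA_def)

lemma phiA_tail: "1 \<le> \<bar>u\<bar> \<Longrightarrow> phiA u \<le> 2 / (pi\<^sup>2 * u\<^sup>2)"
proof -
  assume u: "1 \<le> \<bar>u\<bar>"
  then have False': "u \<noteq> 0" by auto
  then have D: "(pi * u)\<^sup>2 > 0" by simp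
  have "1 - cos (pi * u) \<le> 2" using cos_ge_minus_one[of "pi * u"] by simp
  then have "(1 - cos (pi * u)) / (pi * u)\<^sup>2 \<le> 2 / (pi * u)\<^sup>2"
    using D by (intro divide_right_mono) auto
  then show ?thesis using False' by (simp add: phiA_def power_mult_distrib)
qed

lemma phiA_lower: "phiA u \<ge> 1/2 - pi\<^sup>2 * u\<^sup>2 / 24"
proof (cases "u = 0")
  case False
  then have D: "(pi * u)\<^sup>2 > 0" by simp
  have c: "cos (pi * u) \<le> 1 - (pi * u)\<^sup>2 / 2 + (pi * u)^4 / 24" by (rule cos_le_quartic)
  have "(1/2 - (pi * u)\<^sup>2 / 24) * (pi * u)\<^sup>2 \<le> 1 - cos (pi * u)"
    using c by (simp add: algebra_simps power2_eq_square power4_eq_xxxx)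
  then have "1/2 - (pi * u)\<^sup>2 / 24 \<le> (1 - cos (pi * u)) / (pi * u)\<^sup>2"
    using D by (simp add: pos_le_divide_eq)
  then show ?thesis using False by (simp add: phiA_def power_mult_distrib)
qed (simp add: phiA_def)

lemma phiB_eq: "phiB u = u * phiA u"
  by (simp add: phiB_def phiA_def power2_eq_square field_simps)



lemma hk_to_lborel:
  fixes g :: "real \<Rightarrow> real"
  assumes m: "g \<in> borel_measurable borel" and nn: "\<And>x. 0 \<le> g x" and h: "(g has_integral I) UNIV"
  shows "integrable lborel g" "integral\<^sup>L lborel g = I"
proof -
  have "g absolutely_integrable_on UNIV"
    using h nn by (intro nonnegative_absolutely_integrable_1) (auto simp: integrable_on_def)
  then have "integrable lebesgue g" by (simp add: set_integrable_def)
  then show i: "integrable lborel g"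
    using integrable_completion[of g lborel] m by simp
  show "integral\<^sup>L lborel g = I"
    using has_integral_integral_lborel[OF i] h by (rule has_integral_unique)
qed

definition rayR :: "real \<Rightarrow> real" where "rayR u = indicator {1..} u * (1 / u\<^sup>2)"
definition rayL :: "real \<Rightarrow> real" where "rayL u = indicator {..-1} u * (1 / u\<^sup>2)"

lemma rayR_meas[measurable]: "rayR \<in> borel_measurable borel"
  unfolding rayR_def by measurable

lemma rayR_int: "integrable lborel rayR" "integral\<^sup>L lborel rayR = 1"
proof -
  have h: "((\<lambda>x::real. 1 / x ^ 2) has_integral 1) {1..}"
    using has_integral_inverse_power_to_inf[of 2 1] by simp
  have e: "rayR = (\<lambda>x. if x \<in> {1..} then 1 / x ^ 2 else 0)"
    by (auto simp: rayR_def fun_eq_iff)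
  have "(rayR has_integral 1) UNIV"
    unfolding e using h by (subst has_integral_restrict_UNIV)
  then show "integrable lborel rayR" "integral\<^sup>L lborel rayR = 1"
    using hk_to_lborel[of rayR 1] by (auto simp: rayR_def)
qed

lemma rayL_eq: "rayL u = rayR (0 + (-1) * u)"
  by (simp add: rayL_def rayR_def indicator_def)

lemma rayL_int: "integrable lborel rayL" "integral\<^sup>L lborel rayL = 1"
proof -
  show "integrable lborel rayL"
    unfolding rayL_eq by (rule lborel_integrable_real_affine[OF rayR_int(1)]) simp
  have "integral\<^sup>L lborel rayR = \<bar>-1\<bar> *\<^sub>R (\<integral>x. rayR (0 + (-1) * x) \<partial>lborel)"
    by (rule lborel_integral_real_affine) simp
  moreover have "rayL = (\<lambda>x. rayR (- x))"
    by (auto simp: rayL_def rayR_def indicator_def fun_eq_iff)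
  ultimately show "integral\<^sup>L lborel rayL = 1"
    using rayR_int(2) by simp
qed

lemma poly_int:
  fixes f F :: "real \<Rightarrow> real"
  assumes "\<And>x. (F has_real_derivative f x) (at x)" "continuous_on {-1..1} f"
  shows "integrable lborel (\<lambda>u. indicator {-1..1} u * f u)"
        "integral\<^sup>L lborel (\<lambda>u. indicator {-1..1} u * f u) = F 1 - F (-1)"
proof -
  show "integrable lborel (\<lambda>u. indicator {-1..1} u * f u)"
    using borel_integrable_atLeastAtMost'[OF assms(2)] by (simp add: set_integrable_def)
  show "integral\<^sup>L lborel (\<lambda>u. indicator {-1..1} u * f u) = F 1 - F (-1)"
    using integral_FTC_atLeastAtMost[of "-1" 1 F f] assms
    by (simp add: has_real_derivative_iff_has_vector_derivative[symmetric] has_field_derivative_at_within)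
qed

lemma phiA_meas[measurable]: "phiA \<in> borel_measurable borel"
  unfolding phiA_def by measurable



definition UB :: "real \<Rightarrow> real" where
  "UB u = indicator {-1..1} u * (u\<^sup>2 / 4) + 4 / pi^4 * (rayR u + rayL u)"
definition UA :: "real \<Rightarrow> real" where
  "UA u = indicator {-1..1} u * (1 / 4) + 4 / pi^4 * (rayR u + rayL u)"
definition LA :: "real \<Rightarrow> real" where
  "LA u = indicator {-1..1} u * (1/2 - pi\<^sup>2 * u\<^sup>2 / 24)\<^sup>2"

lemma ray_nonneg: "0 \<le> rayR u" "0 \<le> rayL u"
  by (auto simp: rayR_def rayL_def indicator_def)

lemma tail_bound:
  assumes "1 \<le> \<bar>u\<bar>"
  shows "u\<^sup>2 * (phiA u)\<^sup>2 \<le> 4 / pi^4 * (rayR u + rayL u)" "(phiA u)\<^sup>2 \<le> 4 / pi^4 * (rayR u + rayL u)"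
proof -
  have u0: "u\<^sup>2 \<ge> 1" using assms abs_square_less_1[of u] by linarith
  have r: "rayR u + rayL u = 1 / u\<^sup>2"
    using assms by (auto simp: rayR_def rayL_def indicator_def)
  have p: "phiA u \<le> 2 / (pi\<^sup>2 * u\<^sup>2)" by (rule phiA_tail[OF assms])
  have p2: "(phiA u)\<^sup>2 \<le> (2 / (pi\<^sup>2 * u\<^sup>2))\<^sup>2"
    using p phiA_nonneg by (intro power_mono) auto
  have e: "(2 / (pi\<^sup>2 * u\<^sup>2))\<^sup>2 = 4 / pi^4 * (1 / u\<^sup>2) * (1 / u\<^sup>2)"
    by (simp add: power2_eq_square field_simps power4_eq_xxxx)
  have "u\<^sup>2 * (phiA u)\<^sup>2 \<le> u\<^sup>2 * (4 / pi^4 * (1 / u\<^sup>2) * (1 / u\<^sup>2))"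
    using p2 e by (intro mult_left_mono) auto
  also have "\<dots> = 4 / pi^4 * (1 / u\<^sup>2)" using u0 by (simp add: field_simps power2_eq_square)
  finally show "u\<^sup>2 * (phiA u)\<^sup>2 \<le> 4 / pi^4 * (rayR u + rayL u)" by (simp add: r)
  have "(phiA u)\<^sup>2 \<le> u\<^sup>2 * (phiA u)\<^sup>2" using u0 by (simp add: mult_le_cancel_right1)
  then show "(phiA u)\<^sup>2 \<le> 4 / pi^4 * (rayR u + rayL u)"
    using \<open>u\<^sup>2 * (phiA u)\<^sup>2 \<le> 4 / pi^4 * (rayR u + rayL u)\<close> by linarith
qed

lemma sqB_le: "(phiB u)\<^sup>2 \<le> UB u"
proof (cases "\<bar>u\<bar> \<le> 1")
  case True
  have "(phiA u)\<^sup>2 \<le> (1/2)\<^sup>2" using phiA_le phiA_nonneg by (intro power_mono) auto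
  then have "u\<^sup>2 * (phiA u)\<^sup>2 \<le> u\<^sup>2 * (1/4)" by (intro mult_left_mono) (auto simp: power2_eq_square)
  moreover have "0 \<le> 4 / pi^4 * (rayR u + rayL u)" using ray_nonneg by simp
  moreover have "u \<in> {-1..1}" using True by auto
  ultimately show ?thesis
    by (simp add: UB_def phiB_eq power_mult_distrib)
next
  case False
  then have "u \<notin> {-1..1}" by auto
  then show ?thesis using tail_bound[of u] False
    by (simp add: UB_def phiB_eq power_mult_distrib)
qed

lemma sqA_le: "(phiA u)\<^sup>2 \<le> UA u"
proof (cases "\<bar>u\<bar> \<le> 1")
  case True
  have "(phiA u)\<^sup>2 \<le> (1/2)\<^sup>2" using phiA_le phiA_nonneg by (intro power_mono) auto
  then have "(phiA u)\<^sup>2 \<le> 1/4" by (simp add: power2_eq_square)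
  moreover have "0 \<le> 4 / pi^4 * (rayR u + rayL u)" using ray_nonneg by simp
  moreover have "u \<in> {-1..1}" using True by auto
  ultimately show ?thesis
    by (simp add: UA_def)
next
  case False
  then have "u \<notin> {-1..1}" by auto
  then show ?thesis using tail_bound[of u] False
    by (simp add: UA_def)
qed

lemma LA_le: "LA u \<le> (phiA u)\<^sup>2"
proof (cases "\<bar>u\<bar> \<le> 1")
  case True
  have "u\<^sup>2 \<le> 1" using True by (simp add: abs_square_le_1)
  then have a: "pi\<^sup>2 * u\<^sup>2 \<le> pi\<^sup>2" by (simp add: mult_left_le)
  have "pi * pi \<le> 3.2 * 3.2" by (rule mult_mono) (use pi_approx(2) in auto)
  then have "pi\<^sup>2 < 12" by (simp add: power2_eq_square)
  with a have "0 \<le> 1/2 - pi\<^sup>2 * u\<^sup>2 / 24" by linarith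
  then have "(1/2 - pi\<^sup>2 * u\<^sup>2 / 24)\<^sup>2 \<le> (phiA u)\<^sup>2"
    using phiA_lower by (intro power_mono) auto
  then show ?thesis using True by (simp add: LA_def indicator_def)
next
  case False
  then have "u \<notin> {-1..1}" by auto
  then show ?thesis by (simp add: LA_def)
qed

lemma UB_int: "integrable lborel UB" "integral\<^sup>L lborel UB = 1/6 + 8 / pi^4"
proof -
  note pi = poly_int[where f="\<lambda>u. u\<^sup>2 / 4" and F="\<lambda>u. u^3 / 12"]
  have d: "\<And>x. ((\<lambda>u. u^3 / 12) has_real_derivative x\<^sup>2 / 4) (at x)"
    by (auto intro!: derivative_eq_intros simp: power2_eq_square)
  have c: "continuous_on {-1..1} (\<lambda>u::real. u\<^sup>2 / 4)" by (intro continuous_intros) auto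
  note i1 = pi(1)[OF d c] and v1 = pi(2)[OF d c]
  have i2: "integrable lborel (\<lambda>u. 4 / pi^4 * (rayR u + rayL u))"
    using rayR_int rayL_int by auto
  show "integrable lborel UB" unfolding UB_def[abs_def] using i1 i2 by auto
  show "integral\<^sup>L lborel UB = 1/6 + 8 / pi^4"
    unfolding UB_def[abs_def] using i1 i2 v1 rayR_int rayL_int by simp
qed

lemma UA_int: "integrable lborel UA"
proof -
  have "integrable lborel (\<lambda>u. indicator {-1..1::real} u * (1/4::real))"
    by (intro integrable_mult_left integrable_real_indicator) (auto simp: emeasure_lborel_Icc_eq)
  moreover have i2: "integrable lborel (\<lambda>u. 4 / pi^4 * (rayR u + rayL u))"
    using rayR_int rayL_int by auto
  ultimately show "integrable lborel UA" unfolding UA_def[abs_def] by auto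
qed

lemma LA_int: "integrable lborel LA" "integral\<^sup>L lborel LA = 1/2 - pi\<^sup>2 / 36 + pi^4 / 1440"
proof -
  define c where "c = pi\<^sup>2 / 24"
  have eq: "LA = (\<lambda>u. indicator {-1..1} u * (1/4 - 2 * c / 2 * u\<^sup>2 + c\<^sup>2 * u^4))"
    by (auto simp: LA_def c_def fun_eq_iff power2_eq_square field_simps power4_eq_xxxx)
  note pi = poly_int[where f="\<lambda>u. 1/4 - 2 * c / 2 * u\<^sup>2 + c\<^sup>2 * u^4" and F="\<lambda>u. u / 4 - c * u^3 / 3 + c\<^sup>2 * u^5 / 5"]
  have d: "\<And>x. ((\<lambda>u. u / 4 - c * u^3 / 3 + c\<^sup>2 * u^5 / 5) has_real_derivative 1/4 - 2 * c / 2 * x\<^sup>2 + c\<^sup>2 * x^4) (at x)"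
    by (auto intro!: derivative_eq_intros simp: power2_eq_square power4_eq_xxxx field_simps)
  have cc: "continuous_on {-1..1} (\<lambda>u::real. 1/4 - 2 * c / 2 * u\<^sup>2 + c\<^sup>2 * u^4)" by (intro continuous_intros)
  show "integrable lborel LA" unfolding eq by (rule pi(1)[OF d cc])
  show "integral\<^sup>L lborel LA = 1/2 - pi\<^sup>2 / 36 + pi^4 / 1440"
    unfolding eq pi(2)[OF d cc] by (simp add: c_def power2_eq_square power4_eq_xxxx field_simps)
qed

lemma phiB_meas[measurable]: "phiB \<in> borel_measurable borel"
  unfolding phiB_def by measurable

lemma sqA_int: "integrable lborel (\<lambda>u. (phiA u)\<^sup>2)"
proof (rule Bochner_Integration.integrable_bound[OF UA_int])
  show "(\<lambda>u. (phiA u)\<^sup>2) \<in> borel_measurable lborel" by measurable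
  show "AE x in lborel. norm ((phiA x)\<^sup>2) \<le> norm (UA x)"
  proof (intro AE_I2)
    fix x
    have "0 \<le> (phiA x)\<^sup>2" by simp
    then show "norm ((phiA x)\<^sup>2) \<le> norm (UA x)" using sqA_le[of x] by simp
  qed
qed



lemma sqB_int: "integrable lborel (\<lambda>u. (phiB u)\<^sup>2)"
proof (rule Bochner_Integration.integrable_bound[OF UB_int(1)])
  show "(\<lambda>u. (phiB u)\<^sup>2) \<in> borel_measurable lborel" by measurable
  show "AE x in lborel. norm ((phiB x)\<^sup>2) \<le> norm (UB x)"
  proof (intro AE_I2)
    fix x
    have "0 \<le> (phiB x)\<^sup>2" by simp
    then show "norm ((phiB x)\<^sup>2) \<le> norm (UB x)" using sqB_le[of x] by simp
  qed
qed

definition PP :: real where "PP = integral\<^sup>L lborel (\<lambda>u. (phiA u)\<^sup>2)"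
definition QQ :: real where "QQ = integral\<^sup>L lborel (\<lambda>u. (phiB u)\<^sup>2)"

lemma QQ_lt_PP: "QQ < PP"
proof -
  have q: "QQ \<le> 1/6 + 8 / pi^4"
    unfolding QQ_def UB_int(2)[symmetric]
    by (rule integral_mono[OF sqB_int UB_int(1)]) (rule sqB_le)
  have p: "1/2 - pi\<^sup>2 / 36 + pi^4 / 1440 \<le> PP"
    unfolding PP_def LA_int(2)[symmetric]
    by (rule integral_mono[OF LA_int(1) sqA_int]) (rule LA_le)
  have p1: "pi * pi \<le> 3.15 * 3.15" by (rule mult_mono) (use pi_approx(2) in auto)
  have p2: "3 * 3 \<le> pi * pi" by (rule mult_mono) (use pi_gt3 in auto)
  have p3: "81 \<le> (pi * pi) * (pi * pi)" using mult_mono[OF p2 p2] by simp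
  have e4: "pi^4 = (pi * pi) * (pi * pi)" by (simp add: power4_eq_xxxx)
  have "8 / pi^4 \<le> 8 / 81" unfolding e4 by (rule divide_left_mono) (use p3 in auto)
  moreover have "81 / 1440 \<le> pi^4 / 1440" using p3 e4 by simp
  moreover have "pi\<^sup>2 / 36 \<le> 2757/10000" using p1 by (simp add: power2_eq_square)
  ultimately show ?thesis using p q by linarith
qed

lemma PP_pos: "0 < PP"
proof -
  have "0 \<le> QQ" unfolding QQ_def by (rule integral_nonneg_AE) simp
  then show ?thesis using QQ_lt_PP by linarith
qed



lemma kA_meas[measurable]: "kA \<in> borel_measurable borel"
  unfolding kA_def by measurable
lemma kB_meas[measurable]: "kB \<in> borel_measurable borel"
  unfolding kB_def by measurable

lemma kA_bound: "v \<in> {-1/2..1/2} \<Longrightarrow> norm (kA v) \<le> 1"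
proof -
  assume v: "v \<in> {-1/2..1/2}"
  have "norm (kA v) = \<bar>1 - 2 * \<bar>v\<bar>\<bar>" unfolding kA_def norm_of_real ..
  also have "\<dots> \<le> 1" using v by auto
  finally show ?thesis .
qed

lemma cis_meas[measurable]: "f \<in> borel_measurable M \<Longrightarrow> (\<lambda>x. cis (f x)) \<in> borel_measurable M"
proof -
  assume [measurable]: "f \<in> borel_measurable M"
  have "(\<lambda>x. cis (f x)) = (\<lambda>x. complex_of_real (cos (f x)) + \<i> * complex_of_real (sin (f x)))"
    by (auto simp: fun_eq_iff complex_eq_iff)
  also have "\<dots> \<in> borel_measurable M" by measurable
  finally show ?thesis .
qed
lemma kB_bound: "norm (kB v) \<le> 1"
  using pi_gt3 by (auto simp: kB_def norm_divide)

lemma fourier_leb: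
  fixes k :: "real \<Rightarrow> complex"
  assumes m: "k \<in> borel_measurable borel" and b: "\<And>v. v \<in> {-1/2..1/2} \<Longrightarrow> norm (k v) \<le> 1"
    and h: "((\<lambda>v. k v * cis (2 * pi * u * v)) has_integral c) {-1/2..1/2}"
  shows "integrable lborel (\<lambda>v. indicator {-1/2..1/2} v *\<^sub>R (k v * cis (2 * pi * u * v)))"
    "integral\<^sup>L lborel (\<lambda>v. indicator {-1/2..1/2} v *\<^sub>R (k v * cis (2 * pi * u * v))) = c"
proof -
  show i: "integrable lborel (\<lambda>v. indicator {-1/2..1/2} v *\<^sub>R (k v * cis (2 * pi * u * v)))"
  proof (rule integrableI_bounded_set_indicator[where B=1])
    show "{-1/2..1/2::real} \<in> sets lborel" by simp
    show "(\<lambda>v. k v * cis (2 * pi * u * v)) \<in> borel_measurable lborel" using m by measurable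
    show "emeasure lborel {-1/2..1/2::real} < \<infinity>" by simp
    show "AE x in lborel. x \<in> {-1/2..1/2} \<longrightarrow> norm (k x * cis (2 * pi * u * x)) \<le> 1"
      using b by (auto simp: norm_mult)
  qed
  then have "set_integrable lborel {-1/2..1/2} (\<lambda>v. k v * cis (2 * pi * u * v))"
    by (simp add: set_integrable_def)
  from set_borel_integral_eq_integral(2)[OF this]
  show "integral\<^sup>L lborel (\<lambda>v. indicator {-1/2..1/2} v *\<^sub>R (k v * cis (2 * pi * u * v))) = c"
    using h by (simp add: set_lebesgue_integral_def integral_unique)
qed

lemma cis_sum: "finite S \<Longrightarrow> cis (\<Sum>i\<in>S. f i) = (\<Prod>i\<in>S. cis (f i))"
  by (induction S rule: finite_induct) (auto simp: cis_mult[symmetric])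

lemma abs_half_iff: "(\<bar>a::real\<bar> \<le> 1/2) = (a \<in> {-1/2..1/2})" by auto

lemma mem_unit_cube: "w \<in> unit_cube \<longleftrightarrow> (\<forall>i. w$i \<in> {-1/2..1/2::real})"
  unfolding unit_cube_def mem_Collect_eq abs_half_iff ..

lemma unit_cube_cbox: "(unit_cube :: (real^'n) set) = cbox (vec (-1/2)) (vec (1/2))"
  unfolding set_eq_iff mem_unit_cube mem_box_cart by simp

lemma indicator_unit_cube:
  "(indicator unit_cube (w::real^'n) :: real) = (\<Prod>i\<in>UNIV. indicator {-1/2..1/2} (w$i))"
proof (cases "w \<in> unit_cube")
  case True
  then have a: "\<forall>i. w$i \<in> {-1/2..1/2}" unfolding mem_unit_cube .
  have "\<And>i. indicator {-1/2..1/2} (w$i) = (1::real)" using a by simp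
  then show ?thesis using True by simp
next
  case False
  then obtain i where "\<bar>w$i\<bar> > 1/2" by (auto simp: unit_cube_def not_le)
  then have "indicator {-1/2..1/2} (w$i) = (0::real)" by (auto simp: indicator_def)
  then have "(\<Prod>i\<in>UNIV. indicator {-1/2..1/2} (w$i)) = (0::real)"
    by (intro prod_zero) auto
  then show ?thesis using False by simp
qed

lemma PW_prod:
  fixes K :: "'n::finite \<Rightarrow> real \<Rightarrow> complex" and \<Phi> :: "'n \<Rightarrow> real \<Rightarrow> real" and xc :: "real^'n"
  assumes Km[measurable]: "\<And>i. K i \<in> borel_measurable borel"
    and Kb: "\<And>i v. v \<in> {-1/2..1/2} \<Longrightarrow> norm (K i v) \<le> 1"
    and KF: "\<And>i u. ((\<lambda>v. K i v * cis (2 * pi * u * v)) has_integral of_real (\<Phi> i u)) {-1/2..1/2}"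
    and \<Phi>m[measurable]: "\<And>i. \<Phi> i \<in> borel_measurable borel"
    and \<Phi>i: "\<And>i. integrable lborel (\<lambda>u. (\<Phi> i u)\<^sup>2)"
  defines "f \<equiv> (\<lambda>y::real^'n. complex_of_real (\<Prod>i\<in>UNIV. \<Phi> i (y$i - xc$i)))"
  shows "f \<in> PW unit_cube" "L2_norm_sq f = (\<Prod>i\<in>UNIV. integral\<^sup>L lborel (\<lambda>u. (\<Phi> i u)\<^sup>2))"
proof -
  define g where "g w = (\<Prod>i\<in>UNIV. K i (w$i) * cis (- (2 * pi * (w$i) * (xc$i))))" for w :: "real^'n"
  have gm: "g \<in> borel_measurable lborel" unfolding g_def by measurable
  have cube_sets: "(unit_cube :: (real^'n) set) \<in> sets lborel" unfolding unit_cube_cbox by simp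
  have cube_fin: "emeasure lborel (unit_cube :: (real^'n) set) < \<infinity>" unfolding unit_cube_cbox
    by (simp add: emeasure_lborel_cbox_eq)
  have gb: "norm (g w) \<le> 1" if "w \<in> unit_cube" for w
  proof -
    have "norm (g w) = (\<Prod>i\<in>UNIV. norm (K i (w$i)))" by (simp add: g_def prod_norm[symmetric] norm_mult)
    also have "\<dots> \<le> (\<Prod>i\<in>(UNIV::'n set). 1)"
      using that unfolding mem_unit_cube by (intro prod_mono) (auto intro!: Kb)
    finally show ?thesis by simp
  qed
  have gsq: "set_integrable lborel unit_cube (\<lambda>w. (cmod (g w))\<^sup>2)"
    unfolding set_integrable_def
  proof (rule integrableI_bounded_set_indicator[where B=1, OF cube_sets])
    show "(\<lambda>w. (cmod (g w))\<^sup>2) \<in> borel_measurable lborel" using gm by measurable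
    show "emeasure lborel (unit_cube :: (real^'n) set) < \<infinity>" by (rule cube_fin)
    show "AE x in lborel. x \<in> (unit_cube :: (real^'n) set) \<longrightarrow> norm ((cmod (g x))\<^sup>2) \<le> 1"
      using gb by (auto simp: power_le_one)
  qed
  define h where "h y i v = indicator {-1/2..1/2} v *\<^sub>R (K i v * cis (2 * pi * (y$i - xc$i) * v))" for i v and y :: "real^'n"
  have rep: "f y = (LINT w:unit_cube|lborel. g w * cis (2 * pi * (w \<bullet> y)))" for y
  proof -
    have pt: "indicator unit_cube w *\<^sub>R (g w * cis (2 * pi * (w \<bullet> y))) = (\<Prod>i\<in>UNIV. h y i (w$i))" for w :: "real^'n"
    proof -
      have c: "cis (2 * pi * (w \<bullet> y)) = (\<Prod>i\<in>UNIV. cis (2 * pi * (w$i * y$i)))"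
        by (simp add: inner_vec_def sum_distrib_left cis_sum)
      have "indicator unit_cube w *\<^sub>R (g w * cis (2 * pi * (w \<bullet> y)))
          = complex_of_real (\<Prod>i\<in>UNIV. indicator {-1/2..1/2} (w$i)) *
            ((\<Prod>i\<in>UNIV. K i (w$i) * cis (- (2 * pi * (w$i) * (xc$i)))) * (\<Prod>i\<in>UNIV. cis (2 * pi * (w$i * y$i))))"
        by (simp add: scaleR_conv_of_real indicator_unit_cube g_def c)
      also have "\<dots> = (\<Prod>i\<in>UNIV. complex_of_real (indicator {-1/2..1/2} (w$i)) *
            (K i (w$i) * cis (- (2 * pi * (w$i) * (xc$i))) * cis (2 * pi * (w$i * y$i))))"
        by (simp add: prod.distrib of_real_prod)
      also have "\<dots> = (\<Prod>i\<in>UNIV. h y i (w$i))"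
        by (intro prod.cong refl) (simp add: h_def scaleR_conv_of_real cis_mult algebra_simps)
      finally show ?thesis .
    qed
    have hi: "integrable lborel (h y i)" and hv: "integral\<^sup>L lborel (h y i) = of_real (\<Phi> i (y$i - xc$i))" for i
      using fourier_leb[OF Km Kb KF, of i "y$i - xc$i"] unfolding h_def by auto
    have "(LINT w:unit_cube|lborel. g w * cis (2 * pi * (w \<bullet> y)))
        = (\<integral>w. (\<Prod>i\<in>UNIV. h y i (w$i)) \<partial>lborel)"
      unfolding set_lebesgue_integral_def by (simp add: pt)
    also have "\<dots> = (\<Prod>i\<in>UNIV. integral\<^sup>L lborel (h y i))"
      by (rule lborel_vec_prod(2)[OF hi])
    also have "\<dots> = f y" by (simp add: hv f_def of_real_prod)
    finally show ?thesis by simp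
  qed
  have fm: "f \<in> borel_measurable lborel" unfolding f_def by measurable
  have sq: "(cmod (f y))\<^sup>2 = (\<Prod>i\<in>UNIV. (\<Phi> i (y$i - xc$i))\<^sup>2)" for y
  proof -
    have "(cmod (f y))\<^sup>2 = (\<Prod>i\<in>UNIV. \<Phi> i (y$i - xc$i))\<^sup>2"
      unfolding f_def norm_of_real power2_abs ..
    also have "\<dots> = (\<Prod>i\<in>UNIV. (\<Phi> i (y$i - xc$i))\<^sup>2)" by (rule prod_power_distrib)
    finally show ?thesis .
  qed
  have shi: "integrable lborel (\<lambda>v. (\<Phi> i (v - xc$i))\<^sup>2)" for i
    using lborel_integrable_real_affine[OF \<Phi>i[of i], where c=1 and t="- xc$i"] by simp
  have shv: "integral\<^sup>L lborel (\<lambda>v. (\<Phi> i (v - xc$i))\<^sup>2) = integral\<^sup>L lborel (\<lambda>u. (\<Phi> i u)\<^sup>2)" for i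
    using lborel_integral_real_affine[where c=1 and f="\<lambda>u. (\<Phi> i u)\<^sup>2" and t="- xc$i"] by simp
  have fi: "integrable lborel (\<lambda>y. (cmod (f y))\<^sup>2)"
    unfolding sq by (rule lborel_vec_prod(1)[OF shi])
  show "f \<in> PW unit_cube"
    unfolding PW_def using gm gsq rep fm fi by blast
  show "L2_norm_sq f = (\<Prod>i\<in>UNIV. integral\<^sup>L lborel (\<lambda>u. (\<Phi> i u)\<^sup>2))"
    unfolding L2_norm_sq_def sq lborel_vec_prod(2)[OF shi] shv ..
qed



lemma infsum_finsum:
  fixes f :: "'i \<Rightarrow> 'a \<Rightarrow> real"
  assumes "finite I" "\<And>j. j \<in> I \<Longrightarrow> f j summable_on A"
  shows "(\<lambda>x. \<Sum>j\<in>I. f j x) summable_on A \<and> infsum (\<lambda>x. \<Sum>j\<in>I. f j x) A = (\<Sum>j\<in>I. infsum (f j) A)"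
  using assms
proof (induction I rule: finite_induct)
  case empty then show ?case by simp
next
  case (insert j I)
  then have s1: "f j summable_on A" and ih: "(\<lambda>x. \<Sum>j\<in>I. f j x) summable_on A \<and> infsum (\<lambda>x. \<Sum>j\<in>I. f j x) A = (\<Sum>j\<in>I. infsum (f j) A)"
    by auto
  show ?case using insert(1,2) s1 ih
    by (simp add: summable_on_add infsum_add)
qed

lemma prod_if_one:
  fixes a b :: real and j :: "'n::finite"
  shows "(\<Prod>i\<in>UNIV. if i = j then a else b) = a * b ^ (CARD('n) - 1)"
proof -
  have "(\<Prod>i\<in>UNIV. if i = j then a else b) = (if j = j then a else b) * (\<Prod>i\<in>UNIV - {j}. if i = j then a else b)"
    by (rule prod.remove) auto
  also have "(\<Prod>i\<in>UNIV - {j}. if i = j then a else b) = (\<Prod>i\<in>UNIV - {j}. b)"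
    by (rule prod.cong) auto
  also have "\<dots> = b ^ (CARD('n) - 1)" by (simp add: card_Diff_singleton)
  finally show ?thesis by simp
qed

lemma R_bound:
  fixes d :: nat and t :: real
  assumes d: "d \<ge> 1" and t: "t \<ge> 1"
  shows "real d * t \<le> (1/2 + real d * pi ^ (2 * d - 2) / 2 ^ (2 * d - 1) * t)\<^sup>2"
proof -
  have e: "(2::real) ^ (2 * d - 1) = 2 * 2 ^ (2 * d - 2)"
  proof -
    have "2 * d - 1 = Suc (2 * d - 2)" using d by arith
    then show ?thesis by simp
  qed
  have "(2::real) ^ (2 * d - 2) \<le> pi ^ (2 * d - 2)" by (rule power_mono) (use pi_ge_two in auto)
  then have k: "1/2 \<le> pi ^ (2 * d - 2) / 2 ^ (2 * d - 1)" unfolding e by (simp add: field_simps)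
  define K where "K = real d * pi ^ (2 * d - 2) / 2 ^ (2 * d - 1)"
  have K: "real d / 2 \<le> K" unfolding K_def using mult_left_mono[OF k, of "real d"] by simp
  have "(1/2 + K * t)\<^sup>2 - 2 * (K * t) = (1/2 - K * t)\<^sup>2" by (simp add: power2_eq_square algebra_simps)
  moreover have "0 \<le> (1/2 - K * t)\<^sup>2" by simp
  ultimately have "2 * (K * t) \<le> (1/2 + K * t)\<^sup>2" by linarith
  moreover have "real d * t \<le> 2 * (K * t)" using K t by (simp add: mult_right_mono)
  ultimately show ?thesis unfolding K_def by linarith
qed

theorem proposition4p4:
  fixes \<Lambda> :: "(real ^ 'n) set" and A B :: real
  assumes "stable_sampling \<Lambda> unit_cube A B"
  defines "R \<equiv> 1/2 + real CARD('n) * pi ^ (2 * CARD('n) - 2) / 2 ^ (2 * CARD('n) - 1) * (B / A)"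
  shows "\<forall>x :: real ^ 'n. \<Lambda> \<inter> {y. \<forall>i. \<bar>y $ i - x $ i\<bar> \<le> R} \<noteq> {}"
proof (intro allI notI)
  fix x0 :: "real ^ 'n"
  assume empty: "\<Lambda> \<inter> {y. \<forall>i. \<bar>y $ i - x0 $ i\<bar> \<le> R} = {}"
  define d where "d = CARD('n)"
  have d1: "d \<ge> 1" unfolding d_def by (simp add: Suc_le_eq)
  have A0: "0 < A" and AB: "A \<le> B" and ss: "\<And>f. f \<in> PW unit_cube \<Longrightarrow> (\<lambda>l. (cmod (f l))\<^sup>2) summable_on \<Lambda>
        \<and> A * L2_norm_sq f \<le> (\<Sum>\<^sub>\<infinity>l\<in>\<Lambda>. (cmod (f l))\<^sup>2)
        \<and> (\<Sum>\<^sub>\<infinity>l\<in>\<Lambda>. (cmod (f l))\<^sup>2) \<le> B * L2_norm_sq f"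
    using assms(1) unfolding stable_sampling_def by auto
  have t1: "B / A \<ge> 1" using A0 AB by simp
  have Rge: "real d * (B / A) \<le> R\<^sup>2" unfolding R_def d_def[symmetric] by (rule R_bound[OF d1 t1])
  have Rpos: "R > 0" unfolding R_def using A0 AB pi_gt_zero
    by (intro add_pos_nonneg) (auto intro!: mult_nonneg_nonneg divide_nonneg_nonneg)
  define F where "F = (\<lambda>y::real^'n. complex_of_real (\<Prod>i\<in>UNIV. phiA (y$i - x0$i)))"
  define H where "H j = (\<lambda>y::real^'n. complex_of_real (\<Prod>i\<in>UNIV. (if i = j then phiB else phiA) (y$i - x0$i)))" for j
  have FPW: "F \<in> PW unit_cube" and FL: "L2_norm_sq F = (\<Prod>i\<in>(UNIV::'n set). PP)"
    using PW_prod[where K="\<lambda>_. kA" and \<Phi>="\<lambda>_. phiA" and xc=x0, OF kA_meas kA_bound fourierA phiA_meas sqA_int]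
    unfolding F_def PP_def by auto
  have HPW: "H j \<in> PW unit_cube" and HL: "L2_norm_sq (H j) = (\<Prod>i\<in>(UNIV::'n set). if i = j then QQ else PP)" for j
  proof -
    have Km: "\<And>i. (if i = j then kB else kA) \<in> borel_measurable borel" by simp
    have Kb: "\<And>i v. v \<in> {-1/2..1/2} \<Longrightarrow> norm ((if i = j then kB else kA) v) \<le> 1"
      using kA_bound kB_bound by simp
    have KF: "\<And>i u. ((\<lambda>v. (if i = j then kB else kA) v * cis (2 * pi * u * v)) has_integral
        of_real ((if i = j then phiB else phiA) u)) {-1/2..1/2}"
      using fourierA fourierB by simp
    have \<Phi>m: "\<And>i. (if i = j then phiB else phiA) \<in> borel_measurable borel" by simp
    have \<Phi>i: "\<And>i. integrable lborel (\<lambda>u. ((if i = j then phiB else phiA) u)\<^sup>2)"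
      using sqA_int sqB_int by simp
    note P = PW_prod[where K="\<lambda>i. if i = j then kB else kA" and \<Phi>="\<lambda>i. if i = j then phiB else phiA" and xc=x0,
        OF Km Kb KF \<Phi>m \<Phi>i]
    show "H j \<in> PW unit_cube" using P(1) unfolding H_def .
    have "L2_norm_sq (H j) = (\<Prod>i\<in>UNIV. integral\<^sup>L lborel (\<lambda>u. ((if i = j then phiB else phiA) u)\<^sup>2))"
      using P(2) unfolding H_def .
    also have "\<dots> = (\<Prod>i\<in>(UNIV::'n set). if i = j then QQ else PP)"
      by (intro prod.cong) (auto simp: PP_def QQ_def)
    finally show "L2_norm_sq (H j) = (\<Prod>i\<in>(UNIV::'n set). if i = j then QQ else PP)" .
  qed
  have FL': "L2_norm_sq F = PP ^ d" using FL by (simp add: d_def)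
  have HL': "L2_norm_sq (H j) = QQ * PP ^ (d - 1)" for j
    using HL[of j] prod_if_one[of j QQ PP] by (simp add: d_def)
  have Hpt: "H j y = complex_of_real (y$j - x0$j) * F y" for j y
  proof -
    have "(\<Prod>i\<in>UNIV. (if i = j then phiB else phiA) (y$i - x0$i))
        = (\<Prod>i\<in>UNIV. (if i = j then (y$j - x0$j) else 1) * phiA (y$i - x0$i))"
      by (intro prod.cong) (auto simp: phiB_eq)
    also have "\<dots> = (y$j - x0$j) * (\<Prod>i\<in>UNIV. phiA (y$i - x0$i))"
      by (simp add: prod.distrib)
    finally have e: "(\<Prod>i\<in>UNIV. (if i = j then phiB else phiA) (y$i - x0$i)) = (y$j - x0$j) * (\<Prod>i\<in>UNIV. phiA (y$i - x0$i))" .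
    show ?thesis unfolding H_def F_def by (simp only: e of_real_mult)
  qed
  have ptw: "R\<^sup>2 * (cmod (F l))\<^sup>2 \<le> (\<Sum>j\<in>UNIV. (cmod (H j l))\<^sup>2)" if l: "l \<in> \<Lambda>" for l
  proof -
    have "l \<notin> {y. \<forall>i. \<bar>y $ i - x0 $ i\<bar> \<le> R}" using l empty by blast
    then have "\<exists>j. \<not> \<bar>l$j - x0$j\<bar> \<le> R" by simp
    then obtain j where j: "\<bar>l$j - x0$j\<bar> > R" by (auto simp only: not_le)
    have "R\<^sup>2 \<le> (l$j - x0$j)\<^sup>2"
      using j Rpos by (metis abs_le_square_iff abs_of_pos less_le)
    then have "R\<^sup>2 * (cmod (F l))\<^sup>2 \<le> (l$j - x0$j)\<^sup>2 * (cmod (F l))\<^sup>2"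
      by (intro mult_right_mono) auto
    also have "\<dots> = (cmod (H j l))\<^sup>2"
      unfolding Hpt norm_mult norm_of_real power_mult_distrib power2_abs ..
    also have "\<dots> \<le> (\<Sum>j\<in>UNIV. (cmod (H j l))\<^sup>2)"
      by (rule member_le_sum) auto
    finally show ?thesis .
  qed
  note sF = ss[OF FPW]
  have sH: "(\<lambda>l. (cmod (H j l))\<^sup>2) summable_on \<Lambda>"
     and bH: "(\<Sum>\<^sub>\<infinity>l\<in>\<Lambda>. (cmod (H j l))\<^sup>2) \<le> B * (QQ * PP ^ (d - 1))" for j
    using ss[OF HPW[of j]] HL'[of j] by auto
  have fs: "(\<lambda>l. \<Sum>j\<in>UNIV. (cmod (H j l))\<^sup>2) summable_on \<Lambda> \<and>
      infsum (\<lambda>l. \<Sum>j\<in>UNIV. (cmod (H j l))\<^sup>2) \<Lambda> = (\<Sum>j\<in>UNIV. infsum (\<lambda>l. (cmod (H j l))\<^sup>2) \<Lambda>)"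
    by (rule infsum_finsum[where f="\<lambda>j l. (cmod (H j l))\<^sup>2"]) (auto intro: sH)
  have "R\<^sup>2 * (A * PP ^ d) \<le> R\<^sup>2 * (\<Sum>\<^sub>\<infinity>l\<in>\<Lambda>. (cmod (F l))\<^sup>2)"
    using sF FL' by (intro mult_left_mono) auto
  also have "\<dots> = (\<Sum>\<^sub>\<infinity>l\<in>\<Lambda>. R\<^sup>2 * (cmod (F l))\<^sup>2)"
    by (rule infsum_cmult_right[symmetric]) (use sF in auto)
  also have "\<dots> \<le> infsum (\<lambda>l. \<Sum>j\<in>UNIV. (cmod (H j l))\<^sup>2) \<Lambda>"
    by (rule infsum_mono) (use sF fs ptw in \<open>auto intro: summable_on_cmult_right\<close>)
  also have "\<dots> = (\<Sum>j\<in>UNIV. infsum (\<lambda>l. (cmod (H j l))\<^sup>2) \<Lambda>)" using fs by simp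
  also have "\<dots> \<le> (\<Sum>j\<in>(UNIV::'n set). B * (QQ * PP ^ (d - 1)))"
    by (rule sum_mono) (rule bH)
  also have "\<dots> = real d * B * QQ * PP ^ (d - 1)" by (simp add: d_def)
  finally have ineq: "R\<^sup>2 * (A * PP ^ d) \<le> real d * B * QQ * PP ^ (d - 1)" .
  have pd: "PP ^ d = PP * PP ^ (d - 1)" using d1 by (metis Suc_diff_1 less_le_trans zero_less_one power_Suc)
  have ppos: "PP ^ (d - 1) > 0" using PP_pos by simp
  have "(R\<^sup>2 * A * PP) * PP ^ (d - 1) \<le> (real d * B * QQ) * PP ^ (d - 1)"
    using ineq unfolding pd by (simp add: mult_ac)
  then have i2: "R\<^sup>2 * A * PP \<le> real d * B * QQ" using ppos by simp
  have "real d * B * QQ < real d * B * PP"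
    using QQ_lt_PP A0 AB d1 by (intro mult_strict_left_mono) auto
  with i2 have "R\<^sup>2 * A * PP < real d * B * PP" by linarith
  then have "R\<^sup>2 * A < real d * B" using PP_pos by simp
  then have "R\<^sup>2 < real d * (B / A)" using A0 by (simp add: field_simps)
  with Rge show False by linarith
qed


end
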